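(* Let $(H,\leq,\ast)$ be a discrete $\omega$-dimensional poc-set, and let $\Sigma,\Xi$ be almost-equality classes in $H^\circ$. If $\Xi$ intersects the closure $\overline{\Sigma}$ of $\Sigma$ in $H^\circ$, then $\Xi\subseteq\overline{\Sigma}$.
   Context: Poc-set: poset with minimum $0$ and order-reversing involution $\ast$ with $h\le h^\ast\Rightarrow h=0$. Discrete: intervals between proper elements finite. Transverse: none of $h\le k,h^\ast\le k,h\le k^\ast,h^\ast\le k^\ast$; $\omega$-dimensional: no infinite transverse subset. Ultrafilter: $\alpha\subseteq H$ with exactly one of $h,h^\ast$ in $\alpha$ for each $h$, no $h,k\in\alpha$ with $h\le k^\ast$; $H^\circ$ the set of ultrafilters with the topology induced from $2^H$ (product topology). $\alpha,\beta$ are almost equal if $\alpha\smallsetminus\beta$ is finite. *)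

theory Defs
  imports "HOL-Analysis.Analysis"
begin

definition pocset :: "('a \<Rightarrow> 'a \<Rightarrow> bool) \<Rightarrow> ('a \<Rightarrow> 'a) \<Rightarrow> 'a \<Rightarrow> bool" where
  "pocset le star z \<longleftrightarrow>
     (\<forall>h. le h h) \<and>
     (\<forall>h k. le h k \<and> le k h \<longrightarrow> h = k) \<and>
     (\<forall>h k l. le h k \<and> le k l \<longrightarrow> le h l) \<and>
     (\<forall>h. le z h) \<and>
     (\<forall>h. star (star h) = h) \<and>
     (\<forall>h k. le h k \<longrightarrow> le (star k) (star h)) \<and>
     (\<forall>h. le h (star h) \<longrightarrow> h = z)"

definition proper_elt :: "('a \<Rightarrow> 'a) \<Rightarrow> 'a \<Rightarrow> 'a \<Rightarrow> bool" where
  "proper_elt star z h \<longleftrightarrow> h \<noteq> z \<and> h \<noteq> star z"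

definition discrete_pocset :: "('a \<Rightarrow> 'a \<Rightarrow> bool) \<Rightarrow> ('a \<Rightarrow> 'a) \<Rightarrow> 'a \<Rightarrow> bool" where
  "discrete_pocset le star z \<longleftrightarrow>
     (\<forall>h k. proper_elt star z h \<and> proper_elt star z k \<longrightarrow> finite {x. le h x \<and> le x k})"

definition transverse :: "('a \<Rightarrow> 'a \<Rightarrow> bool) \<Rightarrow> ('a \<Rightarrow> 'a) \<Rightarrow> 'a \<Rightarrow> 'a \<Rightarrow> bool" where
  "transverse le star h k \<longleftrightarrow>
     \<not> le h k \<and> \<not> le (star h) k \<and> \<not> le h (star k) \<and> \<not> le (star h) (star k)"

definition omega_dimensional :: "('a \<Rightarrow> 'a \<Rightarrow> bool) \<Rightarrow> ('a \<Rightarrow> 'a) \<Rightarrow> bool" where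
  "omega_dimensional le star \<longleftrightarrow>
     \<not> (\<exists>S. infinite S \<and> (\<forall>h\<in>S. \<forall>k\<in>S. h \<noteq> k \<longrightarrow> transverse le star h k))"

definition ultrafilter :: "('a \<Rightarrow> 'a \<Rightarrow> bool) \<Rightarrow> ('a \<Rightarrow> 'a) \<Rightarrow> 'a set \<Rightarrow> bool" where
  "ultrafilter le star \<alpha> \<longleftrightarrow>
     (\<forall>h. (h \<in> \<alpha>) \<noteq> (star h \<in> \<alpha>)) \<and>
     (\<forall>h\<in>\<alpha>. \<forall>k\<in>\<alpha>. \<not> le h (star k))"

definition Hcirc :: "('a \<Rightarrow> 'a \<Rightarrow> bool) \<Rightarrow> ('a \<Rightarrow> 'a) \<Rightarrow> 'a set set" where
  "Hcirc le star = {\<alpha>. ultrafilter le star \<alpha>}"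

text \<open>The topology on subsets of H induced from 2^H (product of discrete two-point spaces),
  transported along the identification of a subset with its characteristic function.\<close>
definition cantor_top :: "'a set topology" where
  "cantor_top = pullback_topology UNIV (\<lambda>\<alpha> h. h \<in> \<alpha>)
                  (product_topology (\<lambda>_. discrete_topology (UNIV :: bool set)) UNIV)"

definition Hcirc_top :: "('a \<Rightarrow> 'a \<Rightarrow> bool) \<Rightarrow> ('a \<Rightarrow> 'a) \<Rightarrow> 'a set topology" where
  "Hcirc_top le star = subtopology cantor_top (Hcirc le star)"

definition almost_equal :: "'a set \<Rightarrow> 'a set \<Rightarrow> bool" where
  "almost_equal \<alpha> \<beta> \<longleftrightarrow> finite (\<alpha> - \<beta>)"

definition almost_equality_class :: "('a \<Rightarrow> 'a \<Rightarrow> bool) \<Rightarrow> ('a \<Rightarrow> 'a) \<Rightarrow> 'a set set \<Rightarrow> bool" where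
  "almost_equality_class le star \<Sigma> \<longleftrightarrow>
     (\<exists>\<alpha>\<in>Hcirc le star. \<Sigma> = {\<beta>\<in>Hcirc le star. almost_equal \<alpha> \<beta>})"

end

theory Submission
  imports Defs
begin

lemma topspace_Hcirc: "topspace (Hcirc_top le star) = Hcirc le star"
  unfolding Hcirc_top_def cantor_top_def
  by (simp add: topspace_pullback_topology)

lemma closure_char:
  assumes S: "S \<subseteq> Hcirc le star"
  shows "\<alpha> \<in> Hcirc_top le star closure_of S \<longleftrightarrow>
     \<alpha> \<in> Hcirc le star \<and> (\<forall>F. finite F \<longrightarrow> (\<exists>\<sigma>\<in>S. \<forall>h\<in>F. (h\<in>\<sigma>) = (h\<in>\<alpha>)))"
proof
  assume a: "\<alpha> \<in> Hcirc_top le star closure_of S"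
  hence aH: "\<alpha> \<in> Hcirc le star" using topspace_Hcirc in_closure_of by metis
  show "\<alpha> \<in> Hcirc le star \<and> (\<forall>F. finite F \<longrightarrow> (\<exists>\<sigma>\<in>S. \<forall>h\<in>F. (h\<in>\<sigma>) = (h\<in>\<alpha>)))"
  proof (intro conjI aH allI impI)
    fix F :: "'a set" assume fF: "finite F"
    define X where "X = (\<lambda>i. if i \<in> F then {i \<in> \<alpha>} else (UNIV::bool set))"
    have "openin (product_topology (\<lambda>_. discrete_topology (UNIV :: bool set)) UNIV) (\<Pi>\<^sub>E i\<in>UNIV. X i)"
    proof (rule product_topology_basis)
      show "finite {i. X i \<noteq> topspace (discrete_topology (UNIV :: bool set))}"
        by (rule finite_subset[OF _ fF]) (auto simp: X_def)
    qed (simp)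
    hence op: "openin (Hcirc_top le star) ((\<lambda>\<alpha> h. h \<in> \<alpha>) -` (\<Pi>\<^sub>E i\<in>UNIV. X i) \<inter> UNIV \<inter> Hcirc le star)"
      unfolding Hcirc_top_def cantor_top_def openin_subtopology openin_pullback_topology
      by blast
    have "\<alpha> \<in> (\<lambda>\<alpha> h. h \<in> \<alpha>) -` (\<Pi>\<^sub>E i\<in>UNIV. X i) \<inter> UNIV \<inter> Hcirc le star"
    proof -
      have "\<forall>i. (i \<in> \<alpha>) \<in> X i" by (simp add: X_def)
      hence "(\<lambda>h. h \<in> \<alpha>) \<in> (\<Pi>\<^sub>E i\<in>UNIV. X i)" by (simp add: PiE_iff)
      thus ?thesis using aH by blast
    qed
    hence "\<exists>y. y \<in> S \<and> y \<in> (\<lambda>\<alpha> h. h \<in> \<alpha>) -` (\<Pi>\<^sub>E i\<in>UNIV. X i) \<inter> UNIV \<inter> Hcirc le star"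
      by (rule a[unfolded in_closure_of, THEN conjunct2, rule_format, OF conjI, OF _ op])
    then obtain \<sigma> where s1: "\<sigma> \<in> S" and s2: "\<sigma> \<in> (\<lambda>\<alpha> h. h \<in> \<alpha>) -` (\<Pi>\<^sub>E i\<in>UNIV. X i)"
      by blast
    have "\<forall>h\<in>F. (h\<in>\<sigma>) = (h\<in>\<alpha>)"
    proof
      fix h assume hF: "h \<in> F"
      have "(h \<in> \<sigma>) \<in> X h" using s2 by (simp add: PiE_iff)
      thus "(h\<in>\<sigma>) = (h\<in>\<alpha>)" using hF by (simp add: X_def)
    qed
    thus "\<exists>\<sigma>\<in>S. \<forall>h\<in>F. (h\<in>\<sigma>) = (h\<in>\<alpha>)" using s1 by blast
  qed
next
  assume r: "\<alpha> \<in> Hcirc le star \<and> (\<forall>F. finite F \<longrightarrow> (\<exists>\<sigma>\<in>S. \<forall>h\<in>F. (h\<in>\<sigma>) = (h\<in>\<alpha>)))"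
  show "\<alpha> \<in> Hcirc_top le star closure_of S"
    unfolding in_closure_of topspace_Hcirc
  proof (intro conjI allI impI)
    show "\<alpha> \<in> Hcirc le star" using r by blast
    fix T assume T: "\<alpha> \<in> T \<and> openin (Hcirc_top le star) T"
    then obtain V W where W: "openin (product_topology (\<lambda>_. discrete_topology (UNIV :: bool set)) UNIV) W"
      and TV: "T = ((\<lambda>\<alpha> h. h \<in> \<alpha>) -` W \<inter> UNIV) \<inter> Hcirc le star"
      unfolding Hcirc_top_def cantor_top_def openin_subtopology openin_pullback_topology
      by blast
    have "(\<lambda>h. h \<in> \<alpha>) \<in> W" using T TV by blast
    then obtain U where U: "finite {i \<in> UNIV. U i \<noteq> UNIV}" "(\<lambda>h. h \<in> \<alpha>) \<in> Pi\<^sub>E UNIV U" "Pi\<^sub>E UNIV U \<subseteq> W"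
      using W unfolding openin_product_topology_alt by auto
    then obtain \<sigma> where s: "\<sigma> \<in> S" "\<forall>h\<in>{i \<in> UNIV. U i \<noteq> UNIV}. (h\<in>\<sigma>) = (h\<in>\<alpha>)"
      using r by blast
    have "(\<lambda>h. h \<in> \<sigma>) \<in> Pi\<^sub>E UNIV U"
    proof -
      have "\<And>i. (i \<in> \<sigma>) \<in> U i"
      proof -
        fix i show "(i \<in> \<sigma>) \<in> U i"
          using s(2) U(2) by (cases "U i = UNIV") (auto simp: PiE_iff)
      qed
      thus ?thesis by (auto simp: PiE_iff)
    qed
    hence "\<sigma> \<in> T" using U(3) TV s(1) S by blast
    thus "\<exists>y. y \<in> S \<and> y \<in> T" using s(1) by blast
  qed
qed


lemma ps_refl: "pocset le star z \<Longrightarrow> le h h" unfolding pocset_def by blast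
lemma ps_antisym: "pocset le star z \<Longrightarrow> le h k \<Longrightarrow> le k h \<Longrightarrow> h = k" unfolding pocset_def by blast
lemma ps_trans: "pocset le star z \<Longrightarrow> le h k \<Longrightarrow> le k l \<Longrightarrow> le h l" unfolding pocset_def by blast
lemma ps_zero: "pocset le star z \<Longrightarrow> le z h" unfolding pocset_def by blast
lemma ps_inv[simp]: "pocset le star z \<Longrightarrow> star (star h) = h" unfolding pocset_def by blast
lemma ps_anti: "pocset le star z \<Longrightarrow> le h k \<Longrightarrow> le (star k) (star h)" unfolding pocset_def by blast
lemma ps_self: "pocset le star z \<Longrightarrow> le h (star h) \<Longrightarrow> h = z" unfolding pocset_def by blast

lemma ps_anti_iff: "pocset le star z \<Longrightarrow> le (star h) (star k) \<longleftrightarrow> le k h"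
  by (metis ps_anti ps_inv)
lemma ps_swap: "pocset le star z \<Longrightarrow> le h (star k) \<Longrightarrow> le k (star h)"
  by (metis ps_anti ps_inv)
lemma ps_swap2: "pocset le star z \<Longrightarrow> le (star h) k \<Longrightarrow> le (star k) h"
  by (metis ps_anti ps_inv)

lemma uf_excl: "ultrafilter le star \<alpha> \<Longrightarrow> (h \<in> \<alpha>) \<noteq> (star h \<in> \<alpha>)"
  unfolding ultrafilter_def by blast
lemma uf_cons: "ultrafilter le star \<alpha> \<Longrightarrow> h \<in> \<alpha> \<Longrightarrow> k \<in> \<alpha> \<Longrightarrow> \<not> le h (star k)"
  unfolding ultrafilter_def by blast
lemma uf_up: "pocset le star z \<Longrightarrow> ultrafilter le star \<alpha> \<Longrightarrow> h \<in> \<alpha> \<Longrightarrow> le h k \<Longrightarrow> k \<in> \<alpha>"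
  by (metis uf_excl uf_cons ps_inv)
lemma uf_z: "pocset le star z \<Longrightarrow> ultrafilter le star \<alpha> \<Longrightarrow> z \<notin> \<alpha>"
  by (metis uf_cons ps_zero)

lemma uf_sub_eq: "ultrafilter le star \<alpha> \<Longrightarrow> ultrafilter le star \<beta> \<Longrightarrow> \<alpha> \<subseteq> \<beta> \<Longrightarrow> \<alpha> = \<beta>"
  by (metis subsetI subset_antisym uf_excl subsetD)

lemma ae_sym:
  assumes P: "pocset le star z" and a: "ultrafilter le star \<alpha>" and b: "ultrafilter le star \<beta>"
    and f: "finite (\<alpha> - \<beta>)"
  shows "finite (\<beta> - \<alpha>)"
proof -
  have "\<beta> - \<alpha> \<subseteq> star ` (\<alpha> - \<beta>)"
  proof
    fix h assume h: "h \<in> \<beta> - \<alpha>"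
    hence "star h \<in> \<alpha> - \<beta>" using uf_excl[OF a, of h] uf_excl[OF b, of h] by blast
    thus "h \<in> star ` (\<alpha> - \<beta>)" using ps_inv[OF P, of h] by (metis image_eqI)
  qed
  thus ?thesis using f finite_subset by blast
qed

lemma finite_max:
  assumes P: "pocset le star z"
  shows "finite A \<Longrightarrow> A \<noteq> {} \<Longrightarrow> \<exists>m\<in>A. \<forall>y\<in>A. le m y \<longrightarrow> y = m"
proof (induction A rule: finite_ne_induct)
  case (singleton x) then show ?case by simp
next
  case (insert x A)
  then obtain m where m: "m \<in> A" "\<forall>y\<in>A. le m y \<longrightarrow> y = m" by blast
  show ?case
  proof (cases "le m x")
    case True
    have "\<forall>y\<in>insert x A. le x y \<longrightarrow> y = x"
    proof (intro ballI impI)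
      fix y assume y: "y \<in> insert x A" "le x y"
      show "y = x"
      proof (cases "y = x")
        case False
        then have "y \<in> A" using y by blast
        moreover have "le m y" using ps_trans[OF P True y(2)] .
        ultimately have "y = m" using m by blast
        then have "x = m" using ps_antisym[OF P True] y(2) by blast
        then show ?thesis using \<open>y = m\<close> by simp
      qed simp
    qed
    then show ?thesis by blast
  next
    case False
    then show ?thesis using m by blast
  qed
qed

section \<open>Finiteness of down-sets\<close>

lemma D_finite:
  assumes P: "pocset le star z" and Dc: "discrete_pocset le star z"
    and O: "omega_dimensional le star"
    and U: "ultrafilter le star \<sigma>" and pb: "proper_elt star z b"
    and hyp: "\<forall>k\<in>\<sigma>. le k b \<and> k \<noteq> b \<longrightarrow> finite {l\<in>\<sigma>. le l k}"
  shows "finite {k\<in>\<sigma>. le k b}"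
proof -
  define D' where "D' = {k\<in>\<sigma>. le k b \<and> k \<noteq> b}"
  define M where "M = {m\<in>D'. \<forall>y\<in>D'. le m y \<longrightarrow> y = m}"
  have bz: "b \<noteq> z" "b \<noteq> star z" using pb unfolding proper_elt_def by auto
  have sb: "\<not> le (star b) b"
  proof
    assume "le (star b) b"
    hence "le (star b) (star (star b))" using P by simp
    hence "star b = z" using ps_self[OF P] by blast
    hence "b = star z" using ps_inv[OF P, of b] by simp
    thus False using bz by simp
  qed
  have trans: "transverse le star m1 m2" if m: "m1 \<in> M" "m2 \<in> M" "m1 \<noteq> m2" for m1 m2
  proof -
    have m1: "m1 \<in> \<sigma>" "le m1 b" "\<forall>y\<in>D'. le m1 y \<longrightarrow> y = m1" using m unfolding M_def D'_def by auto
    have m2: "m2 \<in> \<sigma>" "le m2 b" "\<forall>y\<in>D'. le m2 y \<longrightarrow> y = m2" using m unfolding M_def D'_def by auto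
    have d1: "m1 \<in> D'" "m2 \<in> D'" using m unfolding M_def by auto
    have "\<not> le m1 m2" using m1(3) d1 m(3) by blast
    moreover have "\<not> le m2 m1" using m2(3) d1 m(3) by blast
    moreover have "\<not> le (star m1) m2"
    proof
      assume "le (star m1) m2"
      hence "le (star m1) b" using ps_trans[OF P _ m2(2)] by blast
      moreover have "le (star b) (star m1)" using ps_anti[OF P m1(2)] .
      ultimately show False using sb ps_trans[OF P] by blast
    qed
    moreover have "\<not> le m1 (star m2)" using uf_cons[OF U m1(1) m2(1)] .
    ultimately show ?thesis unfolding transverse_def using ps_anti_iff[OF P] by blast
  qed
  have Mfin: "finite M"
  proof (rule ccontr)
    assume "infinite M"
    thus False using O trans unfolding omega_dimensional_def by blast
  qed
  have cover: "D' \<subseteq> (\<Union>m\<in>M. {l\<in>\<sigma>. le l m})"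
  proof
    fix x assume x: "x \<in> D'"
    define I where "I = {y\<in>D'. le x y}"
    have xs: "x \<in> \<sigma>" "le x b" "x \<noteq> b" using x unfolding D'_def by auto
    have px: "proper_elt star z x"
    proof -
      have "x \<noteq> z" using uf_z[OF P U] xs(1) by blast
      moreover have "x \<noteq> star z"
      proof
        assume "x = star z"
        hence "le (star z) b" using xs by simp
        moreover have "le b (star z)" using ps_swap[OF P ps_zero[OF P, of "star b"]] by simp
        ultimately show False using ps_antisym[OF P] bz by metis
      qed
      ultimately show ?thesis unfolding proper_elt_def by simp
    qed
    have "I \<subseteq> {y. le x y \<and> le y b}" unfolding I_def D'_def by auto
    hence fI: "finite I" using Dc px pb unfolding discrete_pocset_def by (meson finite_subset)
    have "x \<in> I" unfolding I_def using x ps_refl[OF P] by blast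
    then obtain m where m: "m \<in> I" "\<forall>y\<in>I. le m y \<longrightarrow> y = m"
      using finite_max[OF P fI] by blast
    have "m \<in> M"
    proof -
      have "m \<in> D'" using m unfolding I_def by blast
      moreover have "\<forall>y\<in>D'. le m y \<longrightarrow> y = m"
      proof (intro ballI impI)
        fix y assume "y \<in> D'" "le m y"
        moreover have "le x m" using m unfolding I_def by blast
        ultimately have "y \<in> I" unfolding I_def using ps_trans[OF P] by blast
        thus "y = m" using m \<open>le m y\<close> by blast
      qed
      ultimately show ?thesis unfolding M_def by blast
    qed
    moreover have "x \<in> {l\<in>\<sigma>. le l m}" using xs m unfolding I_def by blast
    ultimately show "x \<in> (\<Union>m\<in>M. {l\<in>\<sigma>. le l m})" by blast
  qed
  have "finite (\<Union>m\<in>M. {l\<in>\<sigma>. le l m})"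
  proof (rule finite_UN_I[OF Mfin])
    fix m assume "m \<in> M"
    hence "m \<in> \<sigma>" "le m b" "m \<noteq> b" unfolding M_def D'_def by auto
    thus "finite {l\<in>\<sigma>. le l m}" using hyp by blast
  qed
  hence "finite D'" using cover finite_subset by blast
  moreover have "{k\<in>\<sigma>. le k b} \<subseteq> insert b D'" unfolding D'_def by auto
  ultimately show ?thesis using finite_subset by blast
qed


section \<open>Single flip\<close>

lemma flip:
  assumes P: "pocset le star z" and Dc: "discrete_pocset le star z"
    and O: "omega_dimensional le star"
    and Sdef: "S = {\<beta>\<in>Hcirc le star. almost_equal \<alpha>0 \<beta>}"
    and a0: "\<alpha>0 \<in> Hcirc le star"
    and xi: "\<xi> \<in> Hcirc_top le star closure_of S"
    and anx: "a \<notin> \<xi>" and az: "a \<noteq> z"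
    and mn: "\<forall>k\<in>\<xi>. le k (star a) \<longrightarrow> k = star a"
  shows "(\<xi> - {star a}) \<union> {a} \<in> Hcirc_top le star closure_of S"
proof -
  define b where "b = star a"
  have SH: "S \<subseteq> Hcirc le star" using Sdef by blast
  note cc = closure_char[OF SH]
  have Uxi: "ultrafilter le star \<xi>" using xi cc unfolding Hcirc_def by blast
  have U0: "ultrafilter le star \<alpha>0" using a0 unfolding Hcirc_def by blast
  have bx: "b \<in> \<xi>" using uf_excl[OF Uxi, of a] anx unfolding b_def by blast
  have ab: "a \<noteq> b" using bx anx by blast
  have astar: "star b = a" unfolding b_def using P by simp
  have bstar: "star a = b" unfolding b_def by simp
  have pb: "proper_elt star z b"
    unfolding proper_elt_def using uf_z[OF P Uxi] bx az astar ps_inv[OF P, of z] by metis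
  have mn': "\<And>k. k \<in> \<xi> \<Longrightarrow> le k b \<Longrightarrow> k = b" using mn unfolding b_def by blast
  have sb: "\<not> le (star b) b"
  proof
    assume "le (star b) b"
    hence "le (star b) (star (star b))" using P by simp
    hence "star b = z" using ps_self[OF P] by blast
    thus False using az astar by simp
  qed
  have hyp: "\<forall>k\<in>\<sigma>. le k b \<and> k \<noteq> b \<longrightarrow> finite {l\<in>\<sigma>. le l k}" if sS: "\<sigma> \<in> S" for \<sigma>
  proof (intro ballI impI)
    fix k assume k: "k \<in> \<sigma>" "le k b \<and> k \<noteq> b"
    show "finite {l\<in>\<sigma>. le l k}"
    proof (rule ccontr)
      assume inf: "infinite {l\<in>\<sigma>. le l k}"
      obtain \<sigma>1 where s1: "\<sigma>1 \<in> S" "\<forall>h\<in>{k}. (h\<in>\<sigma>1) = (h\<in>\<xi>)"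
        using xi cc[of \<xi>] by (meson finite.emptyI finite.insertI)
      have "k \<notin> \<xi>" using mn' k by blast
      hence kn: "k \<notin> \<sigma>1" using s1 by blast
      have Us: "ultrafilter le star \<sigma>" and Us1: "ultrafilter le star \<sigma>1"
        using sS s1 Sdef unfolding Hcirc_def by auto
      have f1: "finite (\<alpha>0 - \<sigma>1)" "finite (\<alpha>0 - \<sigma>)" using sS s1 Sdef unfolding almost_equal_def by auto
      have f2: "finite (\<sigma> - \<alpha>0)" using ae_sym[OF P U0 Us f1(2)] .
      have "\<sigma> - \<sigma>1 \<subseteq> (\<sigma> - \<alpha>0) \<union> (\<alpha>0 - \<sigma>1)" by blast
      hence "finite (\<sigma> - \<sigma>1)" using f1 f2 finite_subset by blast
      hence "infinite ({l\<in>\<sigma>. le l k} - (\<sigma> - \<sigma>1))" using inf by (meson Diff_infinite_finite)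
      hence "{l\<in>\<sigma>. le l k} - (\<sigma> - \<sigma>1) \<noteq> {}" by (metis finite.emptyI)
      then obtain l where "l \<in> \<sigma>1" "le l k" by blast
      hence "k \<in> \<sigma>1" using uf_up[OF P Us1] by blast
      thus False using kn by blast
    qed
  qed
  define \<xi>1 where "\<xi>1 = (\<xi> - {b}) \<union> {a}"
  have mem1: "\<And>h. h \<in> \<xi>1 \<longleftrightarrow> (h \<in> \<xi> \<and> h \<noteq> b) \<or> h = a" unfolding \<xi>1_def by blast
  have U1: "ultrafilter le star \<xi>1"
    unfolding ultrafilter_def
  proof (intro conjI allI ballI)
    fix h
    show "(h \<in> \<xi>1) \<noteq> (star h \<in> \<xi>1)"
    proof (cases "h = a \<or> h = b")
      case True
      then show ?thesis using mem1 astar ps_inv[OF P] ab unfolding b_def by metis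
    next
      case False
      hence "star h \<noteq> b" "star h \<noteq> a" using astar ps_inv[OF P] unfolding b_def by metis+
      then show ?thesis using mem1 uf_excl[OF Uxi, of h] False by metis
    qed
  next
    fix h k assume h: "h \<in> \<xi>1" and k: "k \<in> \<xi>1"
    show "\<not> le h (star k)"
    proof
      assume l: "le h (star k)"
      consider "h = a" "k = a" | "h = a" "k \<in> \<xi>" "k \<noteq> b" | "h \<in> \<xi>" "h \<noteq> b" "k = a" | "h \<in> \<xi>" "k \<in> \<xi>"
        using h k mem1 by blast
      then show False
      proof cases
        case 1 then show ?thesis using l ps_self[OF P] az by blast
      next
        case 2
        then have "le k (star h)" using ps_swap[OF P l] by blast
        then have "le k b" using 2 unfolding b_def by simp
        then show ?thesis using mn' 2 by blast
      next
        case 3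
        then have "le h b" using l unfolding b_def by simp
        then show ?thesis using mn' 3 by blast
      next
        case 4 then show ?thesis using uf_cons[OF Uxi] l by blast
      qed
    qed
  qed
  have "\<xi>1 \<in> Hcirc_top le star closure_of S"
    unfolding cc
  proof (intro conjI allI impI)
    show "\<xi>1 \<in> Hcirc le star" using U1 unfolding Hcirc_def by blast
    fix F :: "'a set" assume fF: "finite F"
    define F' where "F' = F \<union> star ` F \<union> {a, b}"
    have "finite F'" using fF unfolding F'_def by blast
    then obtain \<sigma> where sS: "\<sigma> \<in> S" and ag: "\<forall>h\<in>F'. (h\<in>\<sigma>) = (h\<in>\<xi>)"
      using xi cc by blast
    have Us: "ultrafilter le star \<sigma>" using sS Sdef unfolding Hcirc_def by auto
    define D where "D = {k\<in>\<sigma>. le k b}"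
    have fD: "finite D" unfolding D_def using D_finite[OF P Dc O Us pb hyp[OF sS]] .
    define \<sigma>' where "\<sigma>' = (\<sigma> - D) \<union> star ` D"
    have memD: "\<And>h. h \<in> star ` D \<longleftrightarrow> star h \<in> D"
      using ps_inv[OF P] by (metis image_iff)
    have mem': "\<And>h. h \<in> \<sigma>' \<longleftrightarrow> (h \<in> \<sigma> \<and> h \<notin> D) \<or> star h \<in> D"
      unfolding \<sigma>'_def using memD by blast
    have Dsub: "D \<subseteq> \<sigma>" unfolding D_def by blast
    have Dle: "\<And>k. k \<in> D \<Longrightarrow> le k b" unfolding D_def by blast
    have U': "ultrafilter le star \<sigma>'"
      unfolding ultrafilter_def
    proof (intro conjI allI ballI)
      fix h
      have e1: "(star h \<in> \<sigma>') = (star h \<in> \<sigma> \<and> star h \<notin> D \<or> h \<in> D)"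
        using mem'[of "star h"] ps_inv[OF P, of h] by simp
      show "(h \<in> \<sigma>') \<noteq> (star h \<in> \<sigma>')"
        using mem'[of h] e1 uf_excl[OF Us, of h] Dsub by blast
    next
      fix h k assume h: "h \<in> \<sigma>'" and k: "k \<in> \<sigma>'"
      show "\<not> le h (star k)"
      proof
        assume l: "le h (star k)"
        consider "h \<in> \<sigma>" "h \<notin> D" "k \<in> \<sigma>" "k \<notin> D" | "star h \<in> D" "star k \<in> D"
          | "star h \<in> D" "k \<in> \<sigma>" "k \<notin> D" | "h \<in> \<sigma>" "h \<notin> D" "star k \<in> D"
          using h k mem' by blast
        then show False
        proof cases
          case 1 then show ?thesis using uf_cons[OF Us] l by blast
        next
          case 2
          have "le (star (star h)) (star k)" using l P by simp
          hence "le (star (star h)) b" using ps_trans[OF P _ Dle[OF 2(2)]] by blast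
          moreover have "le (star b) (star (star h))" using ps_anti[OF P Dle[OF 2(1)]] .
          ultimately show ?thesis using sb ps_trans[OF P] by blast
        next
          case 3
          have "le k (star h)" using ps_swap[OF P l] .
          hence "le k b" using ps_trans[OF P _ Dle[OF 3(1)]] by blast
          then show ?thesis using 3 unfolding D_def by blast
        next
          case 4
          have "le h (star k)" using l .
          hence "le h b" using ps_trans[OF P _ Dle[OF 4(3)]] by blast
          then show ?thesis using 4 unfolding D_def by blast
        qed
      qed
    qed
    show "\<exists>\<sigma>\<in>S. \<forall>h\<in>F. (h\<in>\<sigma>) = (h\<in>\<xi>1)"
    proof (intro bexI ballI)
      have "\<alpha>0 - \<sigma>' \<subseteq> (\<alpha>0 - \<sigma>) \<union> D" using mem' by blast
      moreover have "finite (\<alpha>0 - \<sigma>)" using sS Sdef unfolding almost_equal_def by auto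
      ultimately have "almost_equal \<alpha>0 \<sigma>'" unfolding almost_equal_def using fD finite_subset by blast
      thus "\<sigma>' \<in> S" using Sdef U' unfolding Hcirc_def by blast
    next
      fix h assume hF: "h \<in> F"
      show "(h \<in> \<sigma>') = (h \<in> \<xi>1)"
      proof (cases "h = a")
        case True
        have "b \<in> \<sigma>" using ag bx unfolding F'_def by blast
        hence "b \<in> D" unfolding D_def using ps_refl[OF P] by blast
        thus ?thesis using True mem'[of a] mem1[of a] bstar by simp
      next
        case na: False
        show ?thesis
        proof (cases "h = b")
          case True
          have "a \<notin> \<sigma>" using ag anx unfolding F'_def by blast
          hence "a \<notin> D" using Dsub by blast
          moreover have "b \<in> D" using ag bx unfolding F'_def D_def using ps_refl[OF P] by blast
          ultimately show ?thesis using True mem'[of b] mem1[of b] astar ab by simp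
        next
          case nb: False
          have "h \<notin> D"
          proof
            assume "h \<in> D"
            hence "h \<in> \<xi>" "le h b" using ag hF Dsub Dle unfolding F'_def by blast+
            thus False using mn' nb by blast
          qed
          moreover have "star h \<notin> D"
          proof
            assume "star h \<in> D"
            hence "star h \<in> \<xi>" "le (star h) b" using ag hF Dsub Dle unfolding F'_def by blast+
            hence "star h = b" using mn' by blast
            thus False using na astar ps_inv[OF P, of h] by metis
          qed
          moreover have "h \<in> \<sigma> \<longleftrightarrow> h \<in> \<xi>" using ag hF unfolding F'_def by blast
          ultimately show ?thesis using mem' mem1 na nb by metis
        qed
      qed
    qed
  qed
  thus ?thesis unfolding \<xi>1_def b_def .
qed


section \<open>Walking along finite differences\<close>

lemma walk:
  assumes P: "pocset le star z" and Dc: "discrete_pocset le star z"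
    and O: "omega_dimensional le star"
    and Sdef: "S = {\<beta>\<in>Hcirc le star. almost_equal \<alpha>0 \<beta>}"
    and a0: "\<alpha>0 \<in> Hcirc le star"
  shows "\<forall>\<xi> \<eta>. \<xi> \<in> Hcirc_top le star closure_of S \<longrightarrow> ultrafilter le star \<eta> \<longrightarrow>
           finite (\<eta> - \<xi>) \<longrightarrow> card (\<eta> - \<xi>) = n \<longrightarrow> \<eta> \<in> Hcirc_top le star closure_of S"
proof (induction n)
  have SH: "S \<subseteq> Hcirc le star" using Sdef by blast
  note cc = closure_char[OF SH]
  {
    case 0
    show ?case
    proof (intro allI impI)
      fix \<xi> \<eta> assume xi: "\<xi> \<in> Hcirc_top le star closure_of S" and U: "ultrafilter le star \<eta>"
        and f: "finite (\<eta> - \<xi>)" and c: "card (\<eta> - \<xi>) = 0"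
      have Uxi: "ultrafilter le star \<xi>" using xi cc unfolding Hcirc_def by blast
      have "\<eta> \<subseteq> \<xi>" using f c by simp
      hence "\<eta> = \<xi>" using uf_sub_eq[OF U Uxi] by blast
      thus "\<eta> \<in> Hcirc_top le star closure_of S" using xi by simp
    qed
  next
    case (Suc n)
    show ?case
    proof (intro allI impI)
      fix \<xi> \<eta> assume xi: "\<xi> \<in> Hcirc_top le star closure_of S" and U: "ultrafilter le star \<eta>"
        and f: "finite (\<eta> - \<xi>)" and c: "card (\<eta> - \<xi>) = Suc n"
      have Uxi: "ultrafilter le star \<xi>" using xi cc unfolding Hcirc_def by blast
      have ne: "\<eta> - \<xi> \<noteq> {}" using c by (metis card.empty nat.distinct(1))
      obtain a where a: "a \<in> \<eta> - \<xi>" "\<forall>y\<in>\<eta> - \<xi>. le a y \<longrightarrow> y = a"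
        using finite_max[OF P f ne] by blast
      have az: "a \<noteq> z" using uf_z[OF P U] a by blast
      have mn: "\<forall>k\<in>\<xi>. le k (star a) \<longrightarrow> k = star a"
      proof (intro ballI impI)
        fix k assume k: "k \<in> \<xi>" "le k (star a)"
        have "le a (star k)" using ps_swap[OF P k(2)] .
        hence "star k \<in> \<eta>" using uf_up[OF P U] a by blast
        moreover have "star k \<notin> \<xi>" using uf_excl[OF Uxi, of k] k by blast
        ultimately have "star k = a" using a \<open>le a (star k)\<close> by blast
        thus "k = star a" using ps_inv[OF P, of k] by metis
      qed
      have xi1: "(\<xi> - {star a}) \<union> {a} \<in> Hcirc_top le star closure_of S"
        using flip[OF P Dc O Sdef a0 xi _ az mn] a by simp
      have sa: "star a \<notin> \<eta>" using uf_excl[OF U, of a] a by blast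
      have eq: "\<eta> - ((\<xi> - {star a}) \<union> {a}) = (\<eta> - \<xi>) - {a}" using sa by blast
      have fn: "finite (\<eta> - ((\<xi> - {star a}) \<union> {a}))" using f eq by simp
      have cn: "card (\<eta> - ((\<xi> - {star a}) \<union> {a})) = n" using eq c a f by simp
      show "\<eta> \<in> Hcirc_top le star closure_of S" using Suc.IH[rule_format, OF xi1 U fn cn] .
    qed
  }
qed

theorem mainTheorem20:
  fixes le :: "'a \<Rightarrow> 'a \<Rightarrow> bool" and star :: "'a \<Rightarrow> 'a" and z :: 'a
    and \<Sigma> \<Xi> :: "'a set set"
  assumes "pocset le star z"
    and "discrete_pocset le star z"
    and "omega_dimensional le star"
    and "almost_equality_class le star \<Sigma>"
    and "almost_equality_class le star \<Xi>"
    and "\<Xi> \<inter> (Hcirc_top le star) closure_of \<Sigma> \<noteq> {}"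
  shows "\<Xi> \<subseteq> (Hcirc_top le star) closure_of \<Sigma>"
proof
  note P = assms(1)
  obtain \<alpha>0 where a0: "\<alpha>0 \<in> Hcirc le star" and Sd: "\<Sigma> = {\<beta>\<in>Hcirc le star. almost_equal \<alpha>0 \<beta>}"
    using assms(4) unfolding almost_equality_class_def by blast
  obtain \<beta>0 where b0: "\<beta>0 \<in> Hcirc le star" and Xd: "\<Xi> = {\<beta>\<in>Hcirc le star. almost_equal \<beta>0 \<beta>}"
    using assms(5) unfolding almost_equality_class_def by blast
  obtain \<xi> where xi: "\<xi> \<in> \<Xi>" "\<xi> \<in> Hcirc_top le star closure_of \<Sigma>" using assms(6) by blast
  fix \<eta> assume eta: "\<eta> \<in> \<Xi>"
  have U: "ultrafilter le star \<eta>" and Ub: "ultrafilter le star \<beta>0"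
    using eta Xd b0 unfolding Hcirc_def by auto
  have f1: "finite (\<beta>0 - \<eta>)" "finite (\<beta>0 - \<xi>)" using eta xi Xd unfolding almost_equal_def by auto
  have f2: "finite (\<eta> - \<beta>0)" using ae_sym[OF P Ub U f1(1)] .
  have "\<eta> - \<xi> \<subseteq> (\<eta> - \<beta>0) \<union> (\<beta>0 - \<xi>)" by blast
  hence fe: "finite (\<eta> - \<xi>)" using f1 f2 finite_subset by blast
  show "\<eta> \<in> Hcirc_top le star closure_of \<Sigma>"
    using walk[OF P assms(2) assms(3) Sd a0, rule_format, OF xi(2) U fe refl] .
qed

end
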